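(* Let $(Y_k)_{k\ge0}$ be a sequence in $\{0,1\}$, and let $a_0\ge0$, $\eta\in(0,1)$, $p\in(0,1]$, $(\nu_k)_k\in\ell^1_+$, $(\varepsilon_k)_k\in\ell^p_+$. Define $a_{k+1}:=(\eta+\nu_k)^{Y_k}a_k+Y_k\varepsilon_k$ for $k\in\mathbb N_0$, and $C_\nu:=\exp\big(\eta^{-1}\sum_{i=0}^\infty\nu_i\big)$. Then for all $R\ge1$, $k\ge0$ and $q\in[p,1]$, $$a_{k+1}\le C_\nu\Big[a_0+\sum_{j=0}^\infty\varepsilon_j\Big]\quad\text{and}\quad\sum_{k=0}^{R-1}Y_ka_{k+1}^q\le\frac{C_\nu^q}{1-\eta^q}\Big[(\eta a_0)^q+\sum_{j=0}^\infty\varepsilon_j^q\Big].$$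
   Context: $\ell^p_+$ denotes the set of nonnegative sequences $(x_n)_{n\ge0}$ with $\sum_nx_n^p<\infty$. *)

theory Defs
  imports "HOL-Analysis.Analysis"
begin

end

theory Submission
  imports Defs
begin

lemma powr_subadd:
  fixes x y q :: real
  assumes "0 \<le> x" "0 \<le> y" "0 < q" "q \<le> 1"
  shows "(x + y) powr q \<le> x powr q + y powr q"
proof (cases "x + y = 0")
  case True
  then have "x = 0" "y = 0" using assms by auto
  then show ?thesis by simp
next
  case False
  define s where "s = x + y"
  have s: "s > 0" using False assms unfolding s_def by auto
  have t1: "x / s \<le> (x / s) powr q"
  proof -
    have "(x/s) powr 1 \<le> (x/s) powr q"
      by (rule powr_mono') (use assms s in \<open>auto simp: s_def field_simps\<close>)
    then show ?thesis using assms s by simp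
  qed
  have t2: "y / s \<le> (y / s) powr q"
  proof -
    have "(y/s) powr 1 \<le> (y/s) powr q"
      by (rule powr_mono') (use assms s in \<open>auto simp: s_def field_simps\<close>)
    then show ?thesis using assms s by simp
  qed
  have "x / s + y / s = 1" using s by (simp add: s_def add_divide_distrib[symmetric])
  then have "s powr q = s powr q * (x / s + y / s)" by simp
  also have "\<dots> \<le> s powr q * ((x/s) powr q + (y/s) powr q)"
    using t1 t2 by (intro mult_left_mono) auto
  also have "\<dots> = x powr q + y powr q"
    using s assms by (simp add: powr_divide distrib_left)
  finally show ?thesis by (simp add: s_def)
qed

theorem lemma3p5:
  fixes Y :: "nat \<Rightarrow> nat" and a \<nu> \<epsilon> :: "nat \<Rightarrow> real" and \<eta> p :: real
  assumes Y01: "\<And>k. Y k \<in> {0, 1}"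
    and a0: "a 0 \<ge> 0"
    and eta: "0 < \<eta>" "\<eta> < 1"
    and p: "0 < p" "p \<le> 1"
    and nu_nonneg: "\<And>k. \<nu> k \<ge> 0" and nu_sum: "summable \<nu>"
    and eps_nonneg: "\<And>k. \<epsilon> k \<ge> 0" and eps_sum: "summable (\<lambda>k. \<epsilon> k powr p)"
    and rec: "\<And>k. a (Suc k) = (\<eta> + \<nu> k) ^ (Y k) * a k + real (Y k) * \<epsilon> k"
  shows "\<forall>R k q. R \<ge> 1 \<and> p \<le> q \<and> q \<le> 1 \<longrightarrow>
           a (Suc k) \<le> exp ((\<Sum>i. \<nu> i) / \<eta>) * (a 0 + (\<Sum>j. \<epsilon> j))
         \<and> (\<Sum>i<R. real (Y i) * a (Suc i) powr q)
             \<le> exp ((\<Sum>i. \<nu> i) / \<eta>) powr q / (1 - \<eta> powr q)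
                 * ((\<eta> * a 0) powr q + (\<Sum>j. \<epsilon> j powr q))"
proof (intro allI impI)
  fix R k :: nat and q :: real
  assume H: "R \<ge> 1 \<and> p \<le> q \<and> q \<le> 1"
  hence q: "0 < q" "q \<le> 1" "p \<le> q" using p by auto
  define C where "C = exp ((\<Sum>i. \<nu> i) / \<eta>)"
  define P where "P = (\<lambda>k. \<Prod>i<k. (1 + \<nu> i / \<eta>) ^ Y i)"
  define c where "c = rec_nat (a 0) (\<lambda>k ck. \<eta> ^ Y k * ck + real (Y k) * \<epsilon> k)"
  have c0: "c 0 = a 0" and cS: "\<And>k. c (Suc k) = \<eta> ^ Y k * c k + real (Y k) * \<epsilon> k"
    by (simp_all add: c_def)
  have PS: "\<And>k. P (Suc k) = P k * (1 + \<nu> k / \<eta>) ^ Y k" by (simp add: P_def)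
  have Ycases: "\<And>k. Y k = 0 \<or> Y k = 1" using Y01 by auto
  have fac1: "\<And>k. 1 \<le> (1 + \<nu> k / \<eta>) ^ Y k"
    using nu_nonneg eta by (intro one_le_power) auto
  have anonneg: "\<And>k. a k \<ge> 0"
  proof -
    fix k show "a k \<ge> 0"
      by (induction k) (use a0 eta nu_nonneg eps_nonneg in \<open>auto simp: rec\<close>)
  qed
  have cnonneg: "\<And>k. c k \<ge> 0"
  proof -
    fix k show "c k \<ge> 0"
      by (induction k) (use a0 eta nu_nonneg eps_nonneg in \<open>auto simp: c0 cS\<close>)
  qed
  have Pge1: "\<And>k. P k \<ge> 1"
  proof -
    fix k show "P k \<ge> 1"
    proof (induction k)
      case 0 then show ?case by (simp add: P_def)
    next
      case (Suc k) then show ?case using fac1[of k] mult_mono[of 1 "P k" 1 "(1 + \<nu> k / \<eta>) ^ Y k"] by (simp add: PS)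
    qed
  qed
  have Pexp: "\<And>k. P k \<le> exp ((\<Sum>i<k. \<nu> i) / \<eta>)"
  proof -
    fix k show "P k \<le> exp ((\<Sum>i<k. \<nu> i) / \<eta>)"
    proof (induction k)
      case 0 then show ?case by (simp add: P_def)
    next
      case (Suc k)
      have f: "(1 + \<nu> k / \<eta>) ^ Y k \<le> exp (\<nu> k / \<eta>)"
      proof -
        have "(1 + \<nu> k / \<eta>) ^ Y k \<le> 1 + \<nu> k / \<eta>"
          using Ycases[of k] nu_nonneg[of k] eta by auto
        also have "\<dots> \<le> exp (\<nu> k / \<eta>)" by (rule exp_ge_add_one_self)
        finally show ?thesis .
      qed
      have "P (Suc k) = P k * (1 + \<nu> k / \<eta>) ^ Y k" by (rule PS)
      also have "\<dots> \<le> exp ((\<Sum>i<k. \<nu> i) / \<eta>) * exp (\<nu> k / \<eta>)"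
        using Suc.IH f Pge1[of k] fac1[of k] by (intro mult_mono) auto
      also have "\<dots> = exp ((\<Sum>i<Suc k. \<nu> i) / \<eta>)"
        by (simp add: exp_add[symmetric] add_divide_distrib)
      finally show ?case .
    qed
  qed
  have PC: "\<And>k. P k \<le> C"
  proof -
    fix k
    have "(\<Sum>i<k. \<nu> i) \<le> (\<Sum>i. \<nu> i)"
      using nu_sum nu_nonneg by (intro sum_le_suminf) auto
    hence "exp ((\<Sum>i<k. \<nu> i) / \<eta>) \<le> C"
      unfolding C_def using eta by (simp add: divide_right_mono)
    then show "P k \<le> C" using Pexp[of k] by linarith
  qed
  have aPc: "\<And>k. a k \<le> P k * c k"
  proof -
    fix k show "a k \<le> P k * c k"
    proof (induction k)
      case 0 then show ?case by (simp add: P_def c0)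
    next
      case (Suc k)
      show ?case
      proof (cases "Y k = 0")
        case True then show ?thesis using Suc.IH by (simp add: rec PS cS)
      next
        case False
        hence Y1: "Y k = 1" using Ycases[of k] by auto
        have e1: "(\<eta> + \<nu> k) = \<eta> * (1 + \<nu> k / \<eta>)" using eta by (simp add: field_simps)
        have "a (Suc k) = (\<eta> + \<nu> k) * a k + \<epsilon> k" by (simp add: rec Y1)
        also have "\<dots> \<le> (\<eta> + \<nu> k) * (P k * c k) + \<epsilon> k"
          using Suc.IH eta nu_nonneg[of k] by (intro add_right_mono mult_left_mono) auto
        also have "\<dots> \<le> (\<eta> + \<nu> k) * (P k * c k) + (P k * (1 + \<nu> k / \<eta>)) * \<epsilon> k"
        proof -
          have "1 \<le> P k * (1 + \<nu> k / \<eta>)" using Pge1[of k] fac1[of k] Y1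
              mult_mono[of 1 "P k" 1 "(1 + \<nu> k / \<eta>)"] by simp
          then show ?thesis using eps_nonneg[of k]
            using mult_right_mono[of 1 "P k * (1 + \<nu> k / \<eta>)" "\<epsilon> k"] by simp
        qed
        also have "\<dots> = P (Suc k) * c (Suc k)"
          using eta by (simp add: PS cS Y1 field_simps)
        finally show ?thesis .
      qed
    qed
  qed
  have aC: "\<And>k. a k \<le> C * c k"
    using aPc PC cnonneg order_trans mult_right_mono by metis
  have Cpos: "C > 0" by (simp add: C_def)
  have eps_le1: "\<forall>\<^sub>F k in sequentially. \<epsilon> k \<le> 1"
  proof -
    have "(\<lambda>k. \<epsilon> k powr p) \<longlonglongrightarrow> 0" using eps_sum by (rule summable_LIMSEQ_zero)
    hence "\<forall>\<^sub>F k in sequentially. \<epsilon> k powr p < 1" by (rule order_tendstoD) simp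
    then show ?thesis
    proof (rule eventually_mono)
      fix k assume h: "\<epsilon> k powr p < 1"
      show "\<epsilon> k \<le> 1"
      proof (rule ccontr)
        assume "\<not> \<epsilon> k \<le> 1"
        hence "1 < \<epsilon> k" by simp
        hence "1 < \<epsilon> k powr p" using p powr_less_mono2[of p 1 "\<epsilon> k"] by simp
        then show False using h by simp
      qed
    qed
  qed
  have eps_sum1: "summable \<epsilon>"
  proof (rule summable_comparison_test_ev[OF _ eps_sum])
    show "\<forall>\<^sub>F k in sequentially. norm (\<epsilon> k) \<le> \<epsilon> k powr p"
      using eps_le1 
    proof (rule eventually_mono)
      fix k assume "\<epsilon> k \<le> 1"
      hence "\<epsilon> k powr 1 \<le> \<epsilon> k powr p" using p eps_nonneg[of k] by (intro powr_mono') auto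
      then show "norm (\<epsilon> k) \<le> \<epsilon> k powr p" using eps_nonneg[of k] by simp
    qed
  qed
  have eps_sumq: "summable (\<lambda>k. \<epsilon> k powr q)"
  proof (rule summable_comparison_test_ev[OF _ eps_sum])
    show "\<forall>\<^sub>F k in sequentially. norm (\<epsilon> k powr q) \<le> \<epsilon> k powr p"
      using eps_le1 
    proof (rule eventually_mono)
      fix k assume "\<epsilon> k \<le> 1"
      hence "\<epsilon> k powr q \<le> \<epsilon> k powr p" using q eps_nonneg[of k] by (intro powr_mono') auto
      then show "norm (\<epsilon> k powr q) \<le> \<epsilon> k powr p" by simp
    qed
  qed
  have csum: "\<And>k. c k \<le> a 0 + (\<Sum>j<k. \<epsilon> j)"
  proof -
    fix k show "c k \<le> a 0 + (\<Sum>j<k. \<epsilon> j)"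
    proof (induction k)
      case 0 then show ?case by (simp add: c0)
    next
      case (Suc k)
      have "c (Suc k) \<le> c k + \<epsilon> k"
        using Ycases[of k] eta cnonneg[of k] eps_nonneg[of k] mult_right_mono[of \<eta> 1 "c k"] by (auto simp: cS)
      then show ?case using Suc.IH by simp
    qed
  qed
  have first: "a (Suc k) \<le> C * (a 0 + (\<Sum>j. \<epsilon> j))"
  proof -
    have "(\<Sum>j<Suc k. \<epsilon> j) \<le> (\<Sum>j. \<epsilon> j)"
      using eps_sum1 eps_nonneg by (intro sum_le_suminf) auto
    hence "c (Suc k) \<le> a 0 + (\<Sum>j. \<epsilon> j)" using csum[of "Suc k"] by linarith
    hence "C * c (Suc k) \<le> C * (a 0 + (\<Sum>j. \<epsilon> j))" using Cpos by simp
    then show ?thesis using aC[of "Suc k"] by linarith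
  qed
  define s where "s = \<eta> powr q"
  have s: "0 < s" "s < 1" using eta q powr_less_mono2[of q \<eta> 1] by (auto simp: s_def)
  define d where "d = (\<lambda>k. c k powr q)"
  define T where "T = (\<lambda>R. \<Sum>i<R. real (Y i) * d (Suc i))"
  have dstep: "\<And>k. Y k = 1 \<Longrightarrow> d (Suc k) \<le> s * d k + \<epsilon> k powr q"
  proof -
    fix k assume Y1: "Y k = 1"
    have "d (Suc k) = (\<eta> * c k + \<epsilon> k) powr q" by (simp add: d_def cS Y1)
    also have "\<dots> \<le> (\<eta> * c k) powr q + \<epsilon> k powr q"
      using eta cnonneg[of k] eps_nonneg[of k] q by (intro powr_subadd) auto
    also have "(\<eta> * c k) powr q = s * d k"
      using eta cnonneg[of k] by (simp add: s_def d_def powr_mult)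
    finally show "d (Suc k) \<le> s * d k + \<epsilon> k powr q" .
  qed
  have inv: "\<And>R. (1 - s) * T R + s * d R \<le> s * d 0 + (\<Sum>j<R. \<epsilon> j powr q)"
  proof -
    fix R show "(1 - s) * T R + s * d R \<le> s * d 0 + (\<Sum>j<R. \<epsilon> j powr q)"
    proof (induction R)
      case 0 then show ?case by (simp add: T_def)
    next
      case (Suc R)
      show ?case
      proof (cases "Y R = 0")
        case True
        then have "d (Suc R) = d R" by (simp add: d_def cS)
        moreover have "T (Suc R) = T R" using True by (simp add: T_def)
        moreover have "\<epsilon> R powr q \<ge> 0" by simp
        ultimately show ?thesis using Suc.IH by (simp del: powr_nonneg_iff) (smt (verit) powr_ge_zero)
      next
        case False
        hence Y1: "Y R = 1" using Ycases[of R] by auto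
        have "T (Suc R) = T R + d (Suc R)" by (simp add: T_def Y1)
        hence "(1 - s) * T (Suc R) + s * d (Suc R) = (1 - s) * T R + d (Suc R)"
          by (simp add: algebra_simps)
        also have "\<dots> \<le> (1 - s) * T R + s * d R + \<epsilon> R powr q" using dstep[OF Y1] by simp
        finally show ?thesis using Suc.IH by simp
      qed
    qed
  qed
  have Tbound: "T R \<le> (s * d 0 + (\<Sum>j. \<epsilon> j powr q)) / (1 - s)"
  proof -
    have "(\<Sum>j<R. \<epsilon> j powr q) \<le> (\<Sum>j. \<epsilon> j powr q)"
      using eps_sumq by (intro sum_le_suminf) auto
    moreover have "s * d R \<ge> 0" using s by (simp add: d_def)
    ultimately have "(1 - s) * T R \<le> s * d 0 + (\<Sum>j. \<epsilon> j powr q)" using inv[of R] by linarith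
    then show ?thesis using s by (simp add: field_simps)
  qed
  have sum_le: "(\<Sum>i<R. real (Y i) * a (Suc i) powr q) \<le> C powr q * T R"
  proof -
    have "(\<Sum>i<R. real (Y i) * a (Suc i) powr q) \<le> (\<Sum>i<R. C powr q * (real (Y i) * d (Suc i)))"
    proof (rule sum_mono)
      fix i
      have "a (Suc i) powr q \<le> (C * c (Suc i)) powr q"
        using anonneg aC q by (intro powr_mono2) auto
      also have "\<dots> = C powr q * d (Suc i)" using Cpos cnonneg by (simp add: d_def powr_mult)
      finally show "real (Y i) * a (Suc i) powr q \<le> C powr q * (real (Y i) * d (Suc i))"
        by (simp add: mult_left_mono algebra_simps)
    qed
    then show ?thesis by (simp add: T_def sum_distrib_left)
  qed
  have sd0: "s * d 0 = (\<eta> * a 0) powr q"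
    using eta a0 by (simp add: s_def d_def c0 powr_mult)
  have second: "(\<Sum>i<R. real (Y i) * a (Suc i) powr q)
             \<le> C powr q / (1 - \<eta> powr q) * ((\<eta> * a 0) powr q + (\<Sum>j. \<epsilon> j powr q))"
  proof -
    have "C powr q * T R \<le> C powr q * ((s * d 0 + (\<Sum>j. \<epsilon> j powr q)) / (1 - s))"
      using Tbound by (intro mult_left_mono) auto
    then have "C powr q * T R \<le> C powr q / (1 - \<eta> powr q) * ((\<eta> * a 0) powr q + (\<Sum>j. \<epsilon> j powr q))"
      unfolding sd0 by (simp add: s_def)
    then show ?thesis using sum_le by linarith
  qed
  show "a (Suc k) \<le> C * (a 0 + (\<Sum>j. \<epsilon> j))
         \<and> (\<Sum>i<R. real (Y i) * a (Suc i) powr q)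
             \<le> C powr q / (1 - \<eta> powr q)
                 * ((\<eta> * a 0) powr q + (\<Sum>j. \<epsilon> j powr q))"
    using first second by simp
qed

end
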